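(* Let $g\in C(\mathbb{R},\mathbb{R})$ and $\mathcal{G}=\{g\}$. Then $\mathcal{K}_\mathcal{G}=\{\mathrm{CL}(E):E\in\mathrm{CL}(\mathbb{R})\}$ and $\mathcal{L}_\mathcal{G}=\{[g\restriction E]:E\in\mathrm{CL}(\mathbb{R})\}$, where $[g\restriction E]=\{f\in C(\mathbb{R},\mathbb{R}):f\restriction E=g\restriction E\}$.
   Context: For a closed set $E\subseteq\mathbb{R}$, $\mathrm{CL}(E)$ denotes the family of all closed subsets of $E$; $C(\mathbb{R},\mathbb{R})$ is the set of continuous functions $\mathbb{R}\to\mathbb{R}$. For $\mathcal{G}\subseteq C(\mathbb{R},\mathbb{R})$ let $R_\mathcal{G}=\{(f,E)\in C(\mathbb{R},\mathbb{R})\times\mathrm{CL}(\mathbb{R}):(\exists g\in\mathcal{G})\, f\restriction E=g\restriction E\}$. For $\mathcal{F}\subseteq C(\mathbb{R},\mathbb{R})$ and $\mathcal{E}\subseteq\mathrm{CL}(\mathbb{R})$ put $E_\mathcal{G}(\mathcal{F})=\{E\in\mathrm{CL}(\mathbb{R}):(\forall f\in\mathcal{F})\,(f,E)\in R_\mathcal{G}\}$ and $F_\mathcal{G}(\mathcal{E})=\{f\in C(\mathbb{R},\mathbb{R}):(\forall E\in\mathcal{E})\,(f,E)\in R_\mathcal{G}\}$. Let $\mathcal{K}_\mathcal{G}=\{E_\mathcal{G}(\mathcal{F}):\mathcal{F}\subseteq C(\mathbb{R},\mathbb{R})\}$ and $\mathcal{L}_\mathcal{G}=\{F_\mathcal{G}(\mathcal{E}):\mathcal{E}\subseteq\mathrm{CL}(\mathbb{R})\}$.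 *)

theory Defs
  imports "HOL-Analysis.Analysis"
begin

definition Cont :: "(real \<Rightarrow> real) set" where
  "Cont = {f. continuous_on UNIV f}"

definition CL :: "real set \<Rightarrow> real set set" where
  "CL E = {A. closed A \<and> A \<subseteq> E}"

definition R_G :: "(real \<Rightarrow> real) set \<Rightarrow> ((real \<Rightarrow> real) \<times> real set) set" where
  "R_G G = {(f, E). f \<in> Cont \<and> E \<in> CL UNIV \<and> (\<exists>g\<in>G. \<forall>x\<in>E. f x = g x)}"

definition E_G :: "(real \<Rightarrow> real) set \<Rightarrow> (real \<Rightarrow> real) set \<Rightarrow> real set set" where
  "E_G G F = {E \<in> CL UNIV. \<forall>f\<in>F. (f, E) \<in> R_G G}"

definition F_G :: "(real \<Rightarrow> real) set \<Rightarrow> real set set \<Rightarrow> (real \<Rightarrow> real) set" where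
  "F_G G \<E> = {f \<in> Cont. \<forall>E\<in>\<E>. (f, E) \<in> R_G G}"

definition K_G :: "(real \<Rightarrow> real) set \<Rightarrow> real set set set" where
  "K_G G = {E_G G F | F. F \<subseteq> Cont}"

definition L_G :: "(real \<Rightarrow> real) set \<Rightarrow> (real \<Rightarrow> real) set set" where
  "L_G G = {F_G G \<E> | \<E>. \<E> \<subseteq> CL UNIV}"

definition restr_class :: "(real \<Rightarrow> real) \<Rightarrow> real set \<Rightarrow> (real \<Rightarrow> real) set" where
  "restr_class g E = {f \<in> Cont. \<forall>x\<in>E. f x = g x}"

end

theory Submission
  imports Defs
begin

lemma eqset_closed:
  assumes "f \<in> Cont" "g \<in> Cont"
  shows "closed {x. f x = g x}"
  using assms unfolding Cont_def
  by (intro closed_Collect_eq) auto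

lemma K_part:
  assumes g: "g \<in> Cont"
  shows "K_G {g} = {CL E | E. E \<in> CL UNIV}"
proof (intro equalityI subsetI)
  fix K assume "K \<in> K_G {g}"
  then obtain F where F: "F \<subseteq> Cont" and K: "K = E_G {g} F" unfolding K_G_def by auto
  define Z where "Z = (\<Inter>f\<in>F. {x. f x = g x})"
  have cZ: "closed Z" unfolding Z_def using F g eqset_closed by (intro closed_INT) auto
  have "K = CL Z"
    unfolding K E_G_def CL_def R_G_def Z_def using F by auto
  then show "K \<in> {CL E | E. E \<in> CL UNIV}" using cZ unfolding CL_def by auto
next
  fix K assume "K \<in> {CL E | E. E \<in> CL UNIV}"
  then obtain E where E: "closed E" and K: "K = CL E" unfolding CL_def by auto
  define f where "f = (\<lambda>x. g x + (if E = {} then 1 else infdist x E))"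
  have "continuous_on UNIV (\<lambda>x. g x + (if E = {} then 1 else infdist x E))"
    using g unfolding Cont_def by (cases "E = {}") (auto intro!: continuous_intros)
  then have fc: "f \<in> Cont" unfolding Cont_def f_def by simp
  have zero: "{x. f x = g x} = E"
  proof (cases "E = {}")
    case True then show ?thesis unfolding f_def by auto
  next
    case False then show ?thesis unfolding f_def
      using in_closed_iff_infdist_zero[OF E False] by auto
  qed
  have "E_G {g} {f} = CL E"
    unfolding E_G_def CL_def R_G_def using fc zero by auto
  then show "K \<in> K_G {g}" unfolding K_G_def K using fc by blast
qed

lemma L_part:
  assumes g: "g \<in> Cont"
  shows "L_G {g} = {restr_class g E | E. E \<in> CL UNIV}"
proof (intro equalityI subsetI)
  fix L assume "L \<in> L_G {g}"
  then obtain \<E> where S: "\<E> \<subseteq> CL UNIV" and L: "L = F_G {g} \<E>" unfolding L_G_def by auto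
  have "L = restr_class g (closure (\<Union>\<E>))"
  proof (intro equalityI subsetI)
    fix f assume "f \<in> L"
    then have fc: "f \<in> Cont" and h: "\<forall>E\<in>\<E>. \<forall>x\<in>E. f x = g x"
      unfolding L F_G_def R_G_def by auto
    have "\<Union>\<E> \<subseteq> {x. f x = g x}" using h by auto
    then have "closure (\<Union>\<E>) \<subseteq> {x. f x = g x}"
      using eqset_closed[OF fc g] by (rule closure_minimal)
    then show "f \<in> restr_class g (closure (\<Union>\<E>))" unfolding restr_class_def using fc by auto
  next
    fix f assume "f \<in> restr_class g (closure (\<Union>\<E>))"
    then have fc: "f \<in> Cont" and h: "\<forall>x\<in>closure (\<Union>\<E>). f x = g x"
      unfolding restr_class_def by auto
    have "\<forall>x\<in>\<Union>\<E>. f x = g x" using h closure_subset by blast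
    then show "f \<in> L" unfolding L F_G_def R_G_def using fc S by auto
  qed
  then show "L \<in> {restr_class g E | E. E \<in> CL UNIV}" unfolding CL_def by auto
next
  fix L assume "L \<in> {restr_class g E | E. E \<in> CL UNIV}"
  then obtain E where E: "E \<in> CL UNIV" and L: "L = restr_class g E" by auto
  have "F_G {g} {E} = restr_class g E"
    unfolding F_G_def R_G_def restr_class_def using E by auto
  then show "L \<in> L_G {g}" unfolding L_G_def L using E by blast
qed

theorem theorem3p1:
  fixes g :: "real \<Rightarrow> real"
  assumes "g \<in> Cont"
  shows "K_G {g} = {CL E | E. E \<in> CL UNIV} \<and>
         L_G {g} = {restr_class g E | E. E \<in> CL UNIV}"
  using K_part[OF assms] L_part[OF assms] by simp

end
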